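(* Consider the wound-string system $\ddot x_1+2G^1(x,\dot x)=0$, $\ddot x_2+2G^2(x,\dot x)=0$ with $$G^1=\frac{x_1}{2a^2x_1^2+2m^2x_2^2}\Big[a^2(1-y_1^2)-y_2^2-C^2\frac{(a^2x_1^2+m^2x_2^2)^2}{x_1^4x_2^2}\Big],\quad G^2=\frac{x_2}{2a^2x_1^2+2m^2x_2^2}\Big[m^2\big(a^2(1-y_1^2)-y_2^2\big)-a^2C^2\frac{(a^2x_1^2+m^2x_2^2)^2}{x_1^2x_2^4}\Big],$$ where $y_i=\dot x_i$ and $a,C,m$ are real parameters with $0<a^2\le 1$. Then for no such parameter values does the system have exactly one, exactly two, or exactly three Jacobi stable fixed points; and whenever $m\neq0$, $C\neq 0$ and $a^2\neq 1$, the system has exactly four Jacobi stable fixed points.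
   Context: Fixed points are points $(x_1,x_2)$ with $x_1\neq0$, $x_2\neq0$ such that $G^1(x,0)=G^2(x,0)=0$. Einstein summation is used. $N^i_j=\partial G^i/\partial y_j$, $G^i_{j\ell}=\partial N^i_j/\partial y_\ell$, and the deviation curvature tensor is $P^i_j=-2\frac{\partial G^i}{\partial x_j}-2G^\ell G^i_{j\ell}+y_\ell\frac{\partial N^i_j}{\partial x_\ell}+N^i_\ell N^\ell_j$. A fixed point $\bar x$ is Jacobi stable if all eigenvalues of the $2\times2$ matrix $(P^i_j)$ evaluated at $(x,y)=(\bar x,0)$ have strictly negative real parts. *)

theory Defs
  imports "HOL-Analysis.Analysis"
begin

definition comp2 :: "real \<times> real \<Rightarrow> nat \<Rightarrow> real" where
  "comp2 p j = (if j = 1 then fst p else snd p)"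

definition upd2 :: "real \<times> real \<Rightarrow> nat \<Rightarrow> real \<Rightarrow> real \<times> real" where
  "upd2 p j t = (if j = 1 then (t, snd p) else (fst p, t))"

definition pdx :: "(real \<times> real \<Rightarrow> real \<times> real \<Rightarrow> real) \<Rightarrow> nat \<Rightarrow> real \<times> real \<Rightarrow> real \<times> real \<Rightarrow> real" where
  "pdx f j x y = deriv (\<lambda>t. f (upd2 x j t) y) (comp2 x j)"

definition pdy :: "(real \<times> real \<Rightarrow> real \<times> real \<Rightarrow> real) \<Rightarrow> nat \<Rightarrow> real \<times> real \<Rightarrow> real \<times> real \<Rightarrow> real" where
  "pdy f j x y = deriv (\<lambda>t. f x (upd2 y j t)) (comp2 y j)"

definition Gws :: "real \<Rightarrow> real \<Rightarrow> real \<Rightarrow> nat \<Rightarrow> real \<times> real \<Rightarrow> real \<times> real \<Rightarrow> real" where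
  "Gws a C m i x y =
     (let x1 = fst x; x2 = snd x; y1 = fst y; y2 = snd y;
          Q = a\<^sup>2 * x1\<^sup>2 + m\<^sup>2 * x2\<^sup>2 in
      if i = 1 then
        x1 / (2 * a\<^sup>2 * x1\<^sup>2 + 2 * m\<^sup>2 * x2\<^sup>2) *
          (a\<^sup>2 * (1 - y1\<^sup>2) - y2\<^sup>2 - C\<^sup>2 * Q\<^sup>2 / (x1 ^ 4 * x2\<^sup>2))
      else
        x2 / (2 * a\<^sup>2 * x1\<^sup>2 + 2 * m\<^sup>2 * x2\<^sup>2) *
          (m\<^sup>2 * (a\<^sup>2 * (1 - y1\<^sup>2) - y2\<^sup>2) - a\<^sup>2 * C\<^sup>2 * Q\<^sup>2 / (x1\<^sup>2 * x2 ^ 4)))"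

definition Ncoef :: "(nat \<Rightarrow> real \<times> real \<Rightarrow> real \<times> real \<Rightarrow> real) \<Rightarrow> nat \<Rightarrow> nat \<Rightarrow> real \<times> real \<Rightarrow> real \<times> real \<Rightarrow> real" where
  "Ncoef G i j x y = pdy (G i) j x y"

definition Bcoef :: "(nat \<Rightarrow> real \<times> real \<Rightarrow> real \<times> real \<Rightarrow> real) \<Rightarrow> nat \<Rightarrow> nat \<Rightarrow> nat \<Rightarrow> real \<times> real \<Rightarrow> real \<times> real \<Rightarrow> real" where
  "Bcoef G i j l x y = pdy (Ncoef G i j) l x y"

definition Pdev :: "(nat \<Rightarrow> real \<times> real \<Rightarrow> real \<times> real \<Rightarrow> real) \<Rightarrow> nat \<Rightarrow> nat \<Rightarrow> real \<times> real \<Rightarrow> real \<times> real \<Rightarrow> real" where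
  "Pdev G i j x y =
     - 2 * pdx (G i) j x y
     - 2 * (\<Sum>l\<in>{1,2}. G l x y * Bcoef G i j l x y)
     + (\<Sum>l\<in>{1,2}. comp2 y l * pdx (Ncoef G i j) l x y)
     + (\<Sum>l\<in>{1,2}. Ncoef G i l x y * Ncoef G l j x y)"

definition fixed_point :: "(nat \<Rightarrow> real \<times> real \<Rightarrow> real \<times> real \<Rightarrow> real) \<Rightarrow> real \<times> real \<Rightarrow> bool" where
  "fixed_point G x \<longleftrightarrow> fst x \<noteq> 0 \<and> snd x \<noteq> 0 \<and> G 1 x (0, 0) = 0 \<and> G 2 x (0, 0) = 0"

definition jacobi_stable :: "(nat \<Rightarrow> real \<times> real \<Rightarrow> real \<times> real \<Rightarrow> real) \<Rightarrow> real \<times> real \<Rightarrow> bool" where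
  "jacobi_stable G x \<longleftrightarrow>
     (\<forall>z::complex.
        (complex_of_real (Pdev G 1 1 x (0, 0)) - z) * (complex_of_real (Pdev G 2 2 x (0, 0)) - z)
        - complex_of_real (Pdev G 1 2 x (0, 0)) * complex_of_real (Pdev G 2 1 x (0, 0)) = 0
        \<longrightarrow> Re z < 0)"

end

theory Submission
  imports Defs
begin

lemma G1_0: "Gws a C m 1 (x1,x2) (0,0) = x1 / (2*a\<^sup>2*x1\<^sup>2 + 2*m\<^sup>2*x2\<^sup>2) * (a\<^sup>2 - C\<^sup>2*(a\<^sup>2*x1\<^sup>2+m\<^sup>2*x2\<^sup>2)\<^sup>2/(x1^4*x2\<^sup>2))"
  by (simp add: Gws_def)
lemma G2_0: "Gws a C m 2 (x1,x2) (0,0) = x2 / (2*a\<^sup>2*x1\<^sup>2 + 2*m\<^sup>2*x2\<^sup>2) * (m\<^sup>2*a\<^sup>2 - a\<^sup>2*C\<^sup>2*(a\<^sup>2*x1\<^sup>2+m\<^sup>2*x2\<^sup>2)\<^sup>2/(x1\<^sup>2*x2^4))"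
  by (simp add: Gws_def)

locale fpl =
  fixes a C m x1 x2 :: real
  assumes apos: "a\<^sup>2 > 0" and x1n: "x1 \<noteq> 0" and x2n: "x2 \<noteq> 0"
    and rel1: "m\<^sup>2*x2\<^sup>2 = a\<^sup>2*x1\<^sup>2" and rel2: "x2\<^sup>2 = 4*C\<^sup>2*a\<^sup>2"
begin
lemma a0: "a \<noteq> 0" using apos by auto
lemma Qe: "a\<^sup>2*x1\<^sup>2+m\<^sup>2*x2\<^sup>2 = 2*a\<^sup>2*x1\<^sup>2" using rel1 by simp
lemma Q2: "2*a\<^sup>2*x1\<^sup>2+2*m\<^sup>2*x2\<^sup>2 = 2*(2*a\<^sup>2*x1\<^sup>2)" using rel1 by simp
lemma Q: "2*a\<^sup>2*x1\<^sup>2 + 2*m\<^sup>2*x2\<^sup>2 \<noteq> 0" unfolding Q2 using a0 x1n by simp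
lemma m2: "m\<^sup>2 = a\<^sup>2*x1\<^sup>2/x2\<^sup>2" using rel1 x2n by (simp add: field_simps)
lemma C2: "C\<^sup>2 = x2\<^sup>2/(4*a\<^sup>2)" using rel2 a0 by (simp add: field_simps)
lemma nz1: "x1^4*x2\<^sup>2 \<noteq> 0" using x1n x2n by simp
lemma nz2: "x1\<^sup>2*x2^4 \<noteq> 0" using x1n x2n by simp
lemma mn: "m \<noteq> 0" using rel1 a0 x1n by auto

lemma d11: "((\<lambda>t. Gws a C m 1 (t,x2) (0,0)) has_real_derivative 1/(2*x1\<^sup>2)) (at x1)"
    unfolding G1_0
    apply (rule derivative_eq_intros refl Q nz1)+
    apply (simp only: Qe Q2)
    apply (unfold C2 m2)
    apply (simp add: a0 x1n x2n field_simps)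
    apply algebra
    done

lemma d21: "((\<lambda>t. Gws a C m 2 (t,x2) (0,0)) has_real_derivative 0) (at x1)"
    unfolding G2_0
    apply (rule derivative_eq_intros refl Q nz2)+
    apply (simp only: Qe Q2)
    apply (unfold C2 m2)
    apply (simp add: a0 x1n x2n field_simps)
    done

lemma d22: "((\<lambda>t. Gws a C m 2 (x1,t) (0,0)) has_real_derivative m\<^sup>2/(2*x1\<^sup>2)) (at x2)"
    unfolding G2_0
    apply (rule derivative_eq_intros refl Q nz2)+
    apply (simp only: Qe Q2)
    apply (unfold C2 m2)
    apply (simp add: a0 x1n x2n field_simps)
    apply algebra
    done

lemma Nc: "Ncoef (Gws a C m) i l (x1,x2) (0,0) = 0"
  unfolding Ncoef_def pdy_def
  apply (rule DERIV_imp_deriv)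
  apply (cases "i=1"; cases "l=1")
  apply (simp_all add: Gws_def upd2_def comp2_def)
  apply (rule derivative_eq_intros refl Q nz1 nz2 | simp)+
  done

lemma G1z: "Gws a C m 1 (x1,x2) (0,0) = 0"
  unfolding G1_0 Qe C2 using a0 x1n x2n by (simp add: field_simps)
lemma G2z: "Gws a C m 2 (x1,x2) (0,0) = 0"
  unfolding G2_0 Qe C2 m2 using a0 x1n x2n by (simp add: field_simps)

lemma Pd: "Pdev (Gws a C m) i j (x1,x2) (0,0) = -2 * pdx (Gws a C m i) j (x1,x2) (0,0)"
  unfolding Pdev_def using G1z[simplified] by (simp add: G1z G2z Nc comp2_def)

lemma p11: "pdx (Gws a C m 1) 1 (x1,x2) (0,0) = 1/(2*x1\<^sup>2)"
  unfolding pdx_def upd2_def comp2_def using DERIV_imp_deriv[OF d11] by simp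
lemma p21: "pdx (Gws a C m 2) 1 (x1,x2) (0,0) = 0"
  unfolding pdx_def upd2_def comp2_def using DERIV_imp_deriv[OF d21] by simp
lemma p22: "pdx (Gws a C m 2) 2 (x1,x2) (0,0) = m\<^sup>2/(2*x1\<^sup>2)"
  unfolding pdx_def upd2_def comp2_def using DERIV_imp_deriv[OF d22] by simp

lemma stab: "jacobi_stable (Gws a C m) (x1,x2)"
  unfolding jacobi_stable_def Pd p11 p21 p22
proof (intro allI impI)
  fix z :: complex
  let ?p = "-2 * (1/(2*x1\<^sup>2))" and ?q = "-2 * (m\<^sup>2/(2*x1\<^sup>2))"
  assume "(complex_of_real ?p - z) * (complex_of_real ?q - z) -
      complex_of_real (-2 * pdx (Gws a C m 1) 2 (x1, x2) (0, 0)) * complex_of_real (-2 * 0) = 0"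
  then have "(complex_of_real ?p - z) * (complex_of_real ?q - z) = 0" by simp
  then have "z = complex_of_real ?p \<or> z = complex_of_real ?q" by auto
  moreover have "?p < 0" using x1n by (simp add: field_simps)
  moreover have "?q < 0" using x1n mn by (simp add: field_simps)
  ultimately show "Re z < 0" by auto
qed
end

lemma fp_char:
  fixes a C m x1 x2 :: real
  assumes ap: "a\<^sup>2 > 0"
  shows "fixed_point (Gws a C m) (x1,x2) \<longleftrightarrow>
     x1 \<noteq> 0 \<and> x2 \<noteq> 0 \<and> m\<^sup>2*x2\<^sup>2 = a\<^sup>2*x1\<^sup>2 \<and> x2\<^sup>2 = 4*C\<^sup>2*a\<^sup>2"
proof
  assume fp: "fixed_point (Gws a C m) (x1,x2)"
  then have x1n: "x1 \<noteq> 0" and x2n: "x2 \<noteq> 0" and g1: "Gws a C m 1 (x1,x2) (0,0) = 0"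
    and g2: "Gws a C m 2 (x1,x2) (0,0) = 0" by (auto simp: fixed_point_def)
  define Q where "Q = a\<^sup>2*x1\<^sup>2+m\<^sup>2*x2\<^sup>2"
  have Qp: "Q > 0" unfolding Q_def using ap x1n
    by (simp add: add_pos_nonneg)
  have D: "2*a\<^sup>2*x1\<^sup>2 + 2*m\<^sup>2*x2\<^sup>2 = 2*Q" unfolding Q_def by simp
  have e1: "a\<^sup>2 - C\<^sup>2*Q\<^sup>2/(x1^4*x2\<^sup>2) = 0"
    using g1 unfolding G1_0 D Q_def[symmetric] using x1n Qp by simp
  have e2: "m\<^sup>2*a\<^sup>2 - a\<^sup>2*C\<^sup>2*Q\<^sup>2/(x1\<^sup>2*x2^4) = 0"
    using g2 unfolding G2_0 D Q_def[symmetric] using x2n Qp by simp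
  have f1: "a\<^sup>2*(x1^4*x2\<^sup>2) = C\<^sup>2*Q\<^sup>2" using e1 x1n x2n by (simp add: field_simps)
  have f2: "m\<^sup>2*(x1\<^sup>2*x2^4) = C\<^sup>2*Q\<^sup>2" using e2 x1n x2n ap by (simp add: field_simps)
  have "(m\<^sup>2*x2\<^sup>2) * (x1\<^sup>2*x2\<^sup>2) = (a\<^sup>2*x1\<^sup>2) * (x1\<^sup>2*x2\<^sup>2)"
    using f1 f2 by (simp add: power4_eq_xxxx power2_eq_square algebra_simps)
  then have r1: "m\<^sup>2*x2\<^sup>2 = a\<^sup>2*x1\<^sup>2" using x1n x2n by simp
  have "Q = 2*a\<^sup>2*x1\<^sup>2" unfolding Q_def using r1 by simp
  then have "a\<^sup>2*(x1^4*x2\<^sup>2) = (4*C\<^sup>2*a\<^sup>2) * (a\<^sup>2*x1^4)" using f1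
    by (simp add: power4_eq_xxxx power2_eq_square algebra_simps)
  then have "x2\<^sup>2 * (a\<^sup>2*x1^4) = (4*C\<^sup>2*a\<^sup>2) * (a\<^sup>2*x1^4)"
    by (simp add: algebra_simps)
  then have r2: "x2\<^sup>2 = 4*C\<^sup>2*a\<^sup>2" using x1n ap by simp
  show "x1 \<noteq> 0 \<and> x2 \<noteq> 0 \<and> m\<^sup>2*x2\<^sup>2 = a\<^sup>2*x1\<^sup>2 \<and> x2\<^sup>2 = 4*C\<^sup>2*a\<^sup>2"
    using x1n x2n r1 r2 by simp
next
  assume h: "x1 \<noteq> 0 \<and> x2 \<noteq> 0 \<and> m\<^sup>2*x2\<^sup>2 = a\<^sup>2*x1\<^sup>2 \<and> x2\<^sup>2 = 4*C\<^sup>2*a\<^sup>2"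
  then interpret fpl a C m x1 x2 using ap by unfold_locales auto
  show "fixed_point (Gws a C m) (x1,x2)"
    unfolding fixed_point_def using x1n x2n G1z G2z by simp
qed

lemma all_stable:
  fixes a C m :: real
  assumes ap: "a\<^sup>2 > 0" and fp: "fixed_point (Gws a C m) x"
  shows "jacobi_stable (Gws a C m) x"
proof -
  obtain x1 x2 where x: "x = (x1,x2)" by (cases x)
  interpret fpl a C m x1 x2 using fp_char[OF ap, of C m x1 x2] fp ap x by unfold_locales auto
  show ?thesis using stab x by simp
qed

lemma stable_set:
  fixes a C m :: real
  assumes ap: "a\<^sup>2 > 0"
  shows "{x. fixed_point (Gws a C m) x \<and> jacobi_stable (Gws a C m) x} = {x. fixed_point (Gws a C m) x}"
  using all_stable[OF ap] by auto

lemma empty_case: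
  fixes a C m :: real
  assumes ap: "a\<^sup>2 > 0" and h: "m = 0 \<or> C = 0"
  shows "{x. fixed_point (Gws a C m) x} = {}"
proof -
  have "\<not> fixed_point (Gws a C m) (x1,x2)" for x1 x2
  proof
    assume "fixed_point (Gws a C m) (x1,x2)"
    then have "x1 \<noteq> 0 \<and> x2 \<noteq> 0 \<and> m\<^sup>2*x2\<^sup>2 = a\<^sup>2*x1\<^sup>2 \<and> x2\<^sup>2 = 4*C\<^sup>2*a\<^sup>2"
      using fp_char[OF ap] by blast
    then show False using h ap by auto
  qed
  then show ?thesis by auto
qed

lemma four_case:
  fixes a C m :: real
  assumes ap: "a\<^sup>2 > 0" and mn: "m \<noteq> 0" and cn: "C \<noteq> 0"
  shows "card {x. fixed_point (Gws a C m) x} = 4"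
proof -
  define vv where "vv = 2*abs (C*a)"
  define uu where "uu = abs m * vv / abs a"
  have a0: "a \<noteq> 0" using ap by auto
  have vp: "vv > 0" unfolding vv_def using a0 cn by simp
  have uup: "uu > 0" unfolding uu_def using a0 mn vp by simp
  have v2: "vv\<^sup>2 = 4*C\<^sup>2*a\<^sup>2" unfolding vv_def by (simp add: power2_eq_square abs_mult algebra_simps)
  have uu2: "a\<^sup>2*uu\<^sup>2 = m\<^sup>2* vv\<^sup>2" unfolding uu_def using a0
    by (simp add: power2_eq_square abs_mult field_simps)
  have "{x. fixed_point (Gws a C m) x} = {(uu,vv),(uu,-vv),(-uu,vv),(-uu,-vv)}"
  proof (intro set_eqI)
    fix x :: "real \<times> real"
    obtain x1 x2 where x: "x = (x1,x2)" by (cases x)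
    have "fixed_point (Gws a C m) (x1,x2) \<longleftrightarrow> (x2 = vv \<or> x2 = -vv) \<and> (x1 = uu \<or> x1 = -uu)"
    proof
      assume "fixed_point (Gws a C m) (x1,x2)"
      then have h: "x1 \<noteq> 0 \<and> x2 \<noteq> 0 \<and> m\<^sup>2*x2\<^sup>2 = a\<^sup>2*x1\<^sup>2 \<and> x2\<^sup>2 = 4*C\<^sup>2*a\<^sup>2"
        using fp_char[OF ap] by blast
      then have "x2\<^sup>2 = vv\<^sup>2" using v2 by simp
      then have x2v: "x2 = vv \<or> x2 = -vv" by (simp add: power2_eq_iff)
      have "a\<^sup>2*x1\<^sup>2 = a\<^sup>2*uu\<^sup>2" using h uu2 x2v by auto
      then have "x1\<^sup>2 = uu\<^sup>2" using a0 by simp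
      then have "x1 = uu \<or> x1 = -uu" by (simp add: power2_eq_iff)
      then show "(x2 = vv \<or> x2 = -vv) \<and> (x1 = uu \<or> x1 = -uu)" using x2v by simp
    next
      assume h: "(x2 = vv \<or> x2 = -vv) \<and> (x1 = uu \<or> x1 = -uu)"
      then have e1: "x2\<^sup>2 = vv\<^sup>2" and e2: "x1\<^sup>2 = uu\<^sup>2" and n: "x1 \<noteq> 0" "x2 \<noteq> 0" using uup vp by auto
      have r1: "m\<^sup>2*x2\<^sup>2 = a\<^sup>2*x1\<^sup>2" unfolding e1 e2 using uu2 by simp
      have r2: "x2\<^sup>2 = 4*C\<^sup>2*a\<^sup>2" unfolding e1 using v2 .
      show "fixed_point (Gws a C m) (x1,x2)"
        using fp_char[OF ap] n r1 r2 by blast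
    qed
    then show "x \<in> {x. fixed_point (Gws a C m) x} \<longleftrightarrow> x \<in> {(uu,vv),(uu,-vv),(-uu,vv),(-uu,-vv)}"
      using x by auto
  qed
  then show ?thesis using uup vp by simp
qed

theorem theorem4p1:
  fixes a C m :: real
  assumes "0 < a\<^sup>2" and "a\<^sup>2 \<le> 1"
  shows "card {x. fixed_point (Gws a C m) x \<and> jacobi_stable (Gws a C m) x} \<notin> {1, 2, 3} \<and>
         (m \<noteq> 0 \<and> C \<noteq> 0 \<and> a\<^sup>2 \<noteq> 1 \<longrightarrow>
           card {x. fixed_point (Gws a C m) x \<and> jacobi_stable (Gws a C m) x} = 4)"
proof (cases "m = 0 \<or> C = 0")
  case True
  have e: "{x. fixed_point (Gws a C m) x} = {}" by (rule empty_case[OF assms(1) True])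
  show ?thesis unfolding stable_set[OF assms(1)] e using True by auto
next
  case False
  then have "m \<noteq> 0" "C \<noteq> 0" by auto
  then show ?thesis unfolding stable_set[OF assms(1)] using four_case[OF assms(1)] by simp
qed
end
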